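(* For every $\epsilon>0$, the function $\lambda\mapsto G(e(\lambda))$ is bounded on $(\lambda^*+\epsilon,\infty)$.
   Context: Standing setup. Let $\gamma>0$; let $a_1,\dots,a_p>0$ with weights $\omega_i>0$, $\sum_i\omega_i=1$, and $b_1,\dots,b_n>0$ with weights $\pi_j>0$, $\sum_j\pi_j=1$; put $a^*=\max_i a_i$, $b^*=\max_j b_j$. Let $\mu$ be the limiting spectral distribution of $\mathbf{N}\mathbf{N}^T$ where $\mathbf{N}=\mathbf{A}^{1/2}\mathbf{G}\mathbf{B}^{1/2}$ is $k\times l$, $\mathbf{G}$ has iid mean-zero entries of variance $1/l$, $k/l\to\gamma$, and the spectral distributions of $\mathbf{A},\mathbf{B}$ converge to $\nu=\sum_i\omega_i\delta_{a_i}$ and $\underline{\nu}=\sum_j\pi_j\delta_{b_j}$. $\mu$ is a compactly supported probability measure on $[0,\infty)$; $\lambda^*>0$ is the right endpoint of its support, and $s(\lambda)=\int\frac{d\mu(t)}{t-\lambda}$ for $\lambda>\lambda^*$. Define $G(e)=\sum_{j=1}^n\frac{b_j\pi_j}{1+\gamma b_j e}$. It is known (master equations) that there is a continuous (indeed smooth) real function $e(\lambda)$ on $(\lambda^*,\infty)$, never equal to a pole $-1/(\gamma b_j)$ of $G$ and with $a_iG(e(\lambda))\ne\lambda$, satisfying $s(\lambda)=\sum_{i=1}^p\frac{\omega_i}{a_iG(e(\lambda))-\lambda}$ and $e(\lambda)=\sum_{i=1}^p\frac{a_i\omega_i}{a_iG(e(\lambda))-\lambda}$. *)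

theory Defs
  imports "HOL-Probability.Probability"
begin

definition msupport :: "real measure \<Rightarrow> real set" where
  "msupport M = {x. \<forall>r>0. 0 < emeasure M (ball x r)}"

definition Gfun :: "real \<Rightarrow> nat \<Rightarrow> (nat \<Rightarrow> real) \<Rightarrow> (nat \<Rightarrow> real) \<Rightarrow> real \<Rightarrow> real" where
  "Gfun \<gamma> n b \<pi> e = (\<Sum>j<n. b j * \<pi> j / (1 + \<gamma> * b j * e))"

end

theory Submission
  imports Defs
begin

lemma AE_le_Sup_support:
  fixes M :: "real measure"
  assumes sb: "sets M = sets borel" and bdd: "bdd_above (msupport M)"
  shows "AE t in M. t \<le> Sup (msupport M)"
proof -
  define c where "c = Sup (msupport M)"
  have nz: "\<exists>r>0. emeasure M (ball x r) = 0" if "x > c" for x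
  proof -
    have "x \<notin> msupport M"
      using that bdd cSup_upper c_def by fastforce
    then show ?thesis unfolding msupport_def by (auto simp: not_less)
  qed
  then obtain r where r: "\<And>x. x > c \<Longrightarrow> r x > 0 \<and> emeasure M (ball x (r x)) = 0"
    by metis
  have Kn: "AE t in M. t \<notin> {c + 1/Suc n .. c + Suc n}" for n :: nat
  proof -
    define K where "K = {c + 1/Suc n .. c + Suc n}"
    have Kc: "x > c" if "x \<in> K" for x
      using that unfolding K_def by (auto intro: less_le_trans[of _ "c + 1/Suc n"])
    have "compact K" unfolding K_def by simp
    moreover have "K \<subseteq> (\<Union>x\<in>K. ball x (r x))"
      using Kc r by fastforce
    ultimately obtain D where D: "D \<subseteq> K" "finite D" "K \<subseteq> (\<Union>x\<in>D. ball x (r x))"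
      using compactE_image[of K K "\<lambda>x. ball x (r x)"] by blast
    have "\<forall>x\<in>D. AE t in M. t \<notin> ball x (r x)"
    proof
      fix x assume "x \<in> D"
      then have "ball x (r x) \<in> null_sets M"
        using D Kc r sb by (auto simp: null_sets_def)
      then show "AE t in M. t \<notin> ball x (r x)" by (rule AE_not_in)
    qed
    then have "AE t in M. \<forall>x\<in>D. t \<notin> ball x (r x)"
      by (simp add: eventually_ball_finite_distrib[OF D(2)])
    then show ?thesis
      by eventually_elim (use D(3) K_def in blast)
  qed
  then have "AE t in M. \<forall>n::nat. t \<notin> {c + 1/Suc n .. c + Suc n}"
    by (simp add: AE_all_countable)
  then show ?thesis unfolding c_def[symmetric]
  proof eventually_elim
    case (elim t)
    show "t \<le> c"
    proof (rule ccontr)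
      assume "\<not> t \<le> c"
      then have tc: "t - c > 0" by simp
      define n where "n = nat \<lceil>max (t - c) (1/(t-c))\<rceil>"
      have h1: "real (Suc n) > t - c" unfolding n_def by linarith
      have h2: "real (Suc n) > 1/(t-c)" unfolding n_def by linarith
      have "1/ real (Suc n) < t - c"
        using h2 tc by (smt (verit, ccfv_SIG) divide_less_eq mult.commute of_nat_0_less_iff zero_less_Suc)
      with h1 elim[rule_format, of n] show False by simp
    qed
  qed
qed

theorem lemma3p2:
  fixes \<gamma> :: real and p n :: nat
    and a \<omega> b \<pi> :: "nat \<Rightarrow> real"
    and \<mu> :: "real measure" and lam_star \<epsilon> :: real and e :: "real \<Rightarrow> real"
  assumes gamma_pos: "\<gamma> > 0"
    and a_pos: "\<forall>i<p. a i > 0" and omega_pos: "\<forall>i<p. \<omega> i > 0"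
    and omega_sum: "(\<Sum>i<p. \<omega> i) = 1"
    and b_pos: "\<forall>j<n. b j > 0" and pi_pos: "\<forall>j<n. \<pi> j > 0"
    and pi_sum: "(\<Sum>j<n. \<pi> j) = 1"
    and mu_prob: "prob_space \<mu>" and mu_borel: "sets \<mu> = sets borel"
    and supp_compact: "compact (msupport \<mu>)"
    and supp_nonneg: "msupport \<mu> \<subseteq> {0..}"
    and lam_star_def: "lam_star = Sup (msupport \<mu>)"
    and lam_star_pos: "lam_star > 0"
    and e_cont: "continuous_on {lam_star<..} e"
    and e_nonpole: "\<forall>l>lam_star. \<forall>j<n. 1 + \<gamma> * b j * e l \<noteq> 0"
    and e_ne: "\<forall>l>lam_star. \<forall>i<p. a i * Gfun \<gamma> n b \<pi> (e l) \<noteq> l"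
    and master_s: "\<forall>l>lam_star. (\<integral>t. 1 / (t - l) \<partial>\<mu>)
                     = (\<Sum>i<p. \<omega> i / (a i * Gfun \<gamma> n b \<pi> (e l) - l))"
    and master_e: "\<forall>l>lam_star. e l
                     = (\<Sum>i<p. a i * \<omega> i / (a i * Gfun \<gamma> n b \<pi> (e l) - l))"
    and eps_pos: "\<epsilon> > 0"
  shows "bounded ((\<lambda>l. Gfun \<gamma> n b \<pi> (e l)) ` {lam_star + \<epsilon><..})"
proof -
  interpret P: prob_space \<mu> by (rule mu_prob)
  have bdd: "bdd_above (msupport \<mu>)"
    by (rule bounded_imp_bdd_above[OF compact_imp_bounded[OF supp_compact]])
  have AEle: "AE t in \<mu>. t \<le> lam_star"
    using AE_le_Sup_support[OF mu_borel bdd] lam_star_def by simp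
  define K where "K = 1 + lam_star / \<epsilon>"
  define B where "B = (\<Sum>j<n. b j) + 1"
  define \<delta> where "\<delta> = 1 / (2 * \<gamma> * B)"
  define C where "C = max (K / \<delta>) (\<Sum>j<n. 2 * (b j * \<pi> j))"
  have Bpos: "B > 0" unfolding B_def using b_pos
    by (smt (verit, best) lessThan_iff sum_nonneg)
  have bB: "b j \<le> B" if "j < n" for j
  proof -
    have "b j \<le> (\<Sum>j<n. b j)"
      using that b_pos by (intro member_le_sum) (auto intro: less_imp_le)
    then show ?thesis unfolding B_def by simp
  qed
  have dpos: "\<delta> > 0" unfolding \<delta>_def using Bpos gamma_pos by simp
  have Kpos: "K > 0" unfolding K_def using lam_star_pos eps_pos
    by (smt (verit) divide_pos_pos)
  have main: "\<bar>Gfun \<gamma> n b \<pi> (e l)\<bar> \<le> C" if l: "l > lam_star + \<epsilon>" for l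
  proof -
    define g where "g = Gfun \<gamma> n b \<pi> (e l)"
    define s where "s = (\<integral>t. 1 / (t - l) \<partial>\<mu>)"
    have ll: "l > lam_star" using l eps_pos by simp
    have dne: "a i * g - l \<noteq> 0" if "i < p" for i
      using e_ne ll that g_def by auto
    have ge: "g * e l = 1 + l * s"
    proof -
      have "g * e l = (\<Sum>i<p. g * (a i * \<omega> i / (a i * g - l)))"
      proof -
        have "e l = (\<Sum>i<p. a i * \<omega> i / (a i * g - l))"
          using master_e ll unfolding g_def by blast
        then show ?thesis by (simp only: sum_distrib_left)
      qed
      also have "\<dots> = (\<Sum>i<p. \<omega> i + l * (\<omega> i / (a i * g - l)))"
      proof (rule sum.cong)
        fix i assume "i \<in> {..<p}"
        then have "a i * g - l \<noteq> 0" using dne by simp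
        then show "g * (a i * \<omega> i / (a i * g - l)) = \<omega> i + l * (\<omega> i / (a i * g - l))"
          by (simp add: field_simps)
      qed simp
      also have "\<dots> = 1 + l * s"
        using omega_sum master_s ll g_def s_def
        by (simp add: sum.distrib sum_distrib_left)
      finally show ?thesis .
    qed
    have hb: "\<bar>1 + l * s\<bar> \<le> K"
    proof (cases "integrable \<mu> (\<lambda>t. 1 / (t - l))")
      case False
      then have "s = 0" unfolding s_def by (rule not_integrable_integral_eq)
      then show ?thesis using Kpos lam_star_pos eps_pos unfolding K_def by simp
    next
      case True
      define h where "h t = 1 + l * (1 / (t - l))" for t
      have i2: "integrable \<mu> (\<lambda>t. l * (1 / (t - l)))"
        using True by (rule integrable_mult_right)
      have hi: "integrable \<mu> h" unfolding h_def
        by (rule Bochner_Integration.integrable_add[OF P.integrable_const i2])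
      have "(\<integral>t. h t \<partial>\<mu>) = (\<integral>t. 1 \<partial>\<mu>) + (\<integral>t. l * (1 / (t - l)) \<partial>\<mu>)"
        unfolding h_def by (rule Bochner_Integration.integral_add[OF P.integrable_const i2])
      also have "\<dots> = 1 + l * s" unfolding s_def
        by (simp only: integral_mult_right_zero) (simp add: P.prob_space)
      finally have hint: "(\<integral>t. h t \<partial>\<mu>) = 1 + l * s" .
      have AEb: "AE t in \<mu>. \<bar>h t\<bar> \<le> K"
        using AEle
      proof eventually_elim
        case (elim t)
        have tl: "t - l < - \<epsilon>" using elim l by simp
        have ht: "h t = t / (t - l)" unfolding h_def using tl eps_pos
          by (simp add: field_simps)
        show ?case
        proof (cases "t \<le> 0")
          case True
          have "\<bar>t\<bar> \<le> \<bar>t - l\<bar>" using True ll lam_star_pos by simp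
          moreover have "\<bar>t - l\<bar> > 0" using tl eps_pos by simp
          ultimately have "\<bar>t\<bar> / \<bar>t - l\<bar> \<le> 1"
            by (simp only: pos_divide_le_eq) simp
          then have "\<bar>t / (t - l)\<bar> \<le> 1" by (simp only: abs_divide)
          then show ?thesis using ht Kpos K_def lam_star_pos eps_pos
            by (smt (verit) divide_nonneg_nonneg)
        next
          case False
          have "t / (l - t) \<le> lam_star / \<epsilon>"
            using False elim tl eps_pos
            by (intro frac_le) auto
          moreover have "t / (t - l) = - (t / (l - t))"
            by (metis minus_diff_eq minus_divide_right)
          moreover have "t / (l - t) \<ge> 0" using False tl eps_pos
            by (intro divide_nonneg_nonneg) auto
          ultimately have "\<bar>h t\<bar> \<le> lam_star / \<epsilon>" using ht
            by (metis abs_minus_cancel abs_of_nonneg)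
          then show ?thesis unfolding K_def by linarith
        qed
      qed
      have "(\<integral>t. h t \<partial>\<mu>) \<le> (\<integral>t. K \<partial>\<mu>)"
        by (rule integral_mono_AE[OF hi]) (use AEb in auto)
      moreover have "(\<integral>t. - K \<partial>\<mu>) \<le> (\<integral>t. h t \<partial>\<mu>)"
        by (rule integral_mono_AE[OF _ hi]) (use AEb in auto)
      ultimately show ?thesis using hint by (simp add: P.prob_space)
    qed
    show ?thesis
    proof (cases "\<bar>e l\<bar> < \<delta>")
      case True
      have tb: "\<bar>b j * \<pi> j / (1 + \<gamma> * b j * e l)\<bar> \<le> 2 * (b j * \<pi> j)" if j: "j < n" for j
      proof -
        have "\<gamma> * b j * \<bar>e l\<bar> \<le> \<gamma> * B * \<delta>"
          using True bB[OF j] b_pos j gamma_pos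
          by (intro mult_mono) (auto intro: less_imp_le)
        also have "\<gamma> * B * \<delta> = 1/2" unfolding \<delta>_def using Bpos gamma_pos by simp
        finally have "\<gamma> * b j * \<bar>e l\<bar> \<le> 1/2" .
        moreover have "\<bar>\<gamma> * b j * e l\<bar> = \<gamma> * b j * \<bar>e l\<bar>"
          using gamma_pos b_pos j by (simp add: abs_mult less_imp_le)
        ultimately have x: "1 + \<gamma> * b j * e l \<ge> 1/2" by linarith
        have bp: "b j * \<pi> j > 0" using b_pos pi_pos j by simp
        have "\<bar>b j * \<pi> j / (1 + \<gamma> * b j * e l)\<bar> = b j * \<pi> j / (1 + \<gamma> * b j * e l)"
          using x bp by simp
        also have "\<dots> \<le> b j * \<pi> j / (1/2)"
          using x bp by (intro divide_left_mono) auto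
        finally show ?thesis by simp
      qed
      have "\<bar>g\<bar> \<le> (\<Sum>j<n. \<bar>b j * \<pi> j / (1 + \<gamma> * b j * e l)\<bar>)"
        unfolding g_def Gfun_def by (rule sum_abs)
      also have "\<dots> \<le> (\<Sum>j<n. 2 * (b j * \<pi> j))"
        using tb by (intro sum_mono) auto
      finally show ?thesis unfolding C_def g_def by simp
    next
      case False
      then have ep: "\<bar>e l\<bar> > 0" using dpos by simp
      have "\<bar>g\<bar> * \<bar>e l\<bar> \<le> K" using ge hb by (simp add: abs_mult)
      then have "\<bar>g\<bar> \<le> K / \<bar>e l\<bar>" using ep by (simp add: le_divide_eq)
      also have "\<dots> \<le> K / \<delta>" using False dpos Kpos
        by (intro divide_left_mono) auto
      finally show ?thesis unfolding C_def g_def by simp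
    qed
  qed
  show ?thesis
    unfolding bounded_iff using main by (intro exI[of _ C]) auto
qed

end
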